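(* Consider a main effect plan on $n$ runs with factors $F_1,\dots,F_m$ ($m\ge 3$) in which every level of every factor occurs, and fix $i\in\{1,\dots,m\}$. Let $\bar i=\{1,\dots,m+1\}\setminus\{i\}$. (a) $SS_{i;\bar i}=SS_{i;\{m+1\}}$ as functions of $Y\in\mathbb R^n$ if and only if for every $j\in\{1,\dots,m\}\setminus\{i\}$ the incidence matrix $N_{ij}$ satisfies the proportional frequency condition $N_{ij}=r_ir_j'/n$. (b) Suppose $i\le m-1$. Then $SS_{i;\bar i}=SS_{i;\{m,m+1\}}$ as functions of $Y$ if and only if $N_{ij}=N_{im}R_m^{-1}N_{jm}'$ for every $j\in\{1,\dots,m-1\}\setminus\{i\}$.
   Context: Model: $Y=\mathbf 1_n\mu+\sum_{i=1}^m X_i\alpha^i+\epsilon$, where $F_i$ has $a_i$ levels and $X_i$ is the $n\times a_i$ 0-1 design matrix ($(u,t)$ entry $1$ iff $F_i$ is at level $t$ in run $u$); put $X_{m+1}=\mathbf 1_n$. $N_{ij}=X_i'X_j$ is the incidence matrix of $F_i,F_j$ (entry $(s,t)$ = number of runs with $F_i$ at level $s$ and $F_j$ at level $t$), $r_i=X_i'\mathbf 1_n$ is the replication vector of $F_i$, and $R_i=\mathrm{diag}(r_i)$. $P_A=A(A'A)^-A'$ is the orthogonal projector onto the column space of $A$; for $S\subseteq\{1,\dots,m+1\}$, $P_S$ is the projector onto the column space of $[X_j]_{j\in S}$. For $i\notin T$: $C_{i;T}=X_i'(I-P_T)X_i$, $Q_{i;T}=X_i'(I-P_T)Y$, $SS_{i;T}=Q_{i;T}'(C_{i;T})^-Q_{i;T}$.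 *)

theory Defs
  imports Main "Jordan_Normal_Form.Matrix"
begin

(* A generalized inverse M^- of M: any G with M G M = M (one exists, e.g. Moore-Penrose);
   all quantities below are invariant under the choice. *)
definition ginv :: "real mat \<Rightarrow> real mat" where
  "ginv M = (SOME G. G \<in> carrier_mat (dim_col M) (dim_row M) \<and> M * G * M = M)"

definition proj :: "real mat \<Rightarrow> real mat" where
  "proj A = A * ginv (transpose_mat A * A) * transpose_mat A"

(* Design matrices. n runs, m factors, factor j has a j levels (0..a j - 1),
   lev j u = level of factor j in run u.  X_j (1 <= j <= m) is the n x a_j 0-1 matrix,
   X_{m+1} is the all-ones column 1_n. *)
definition Xmat :: "nat \<Rightarrow> nat \<Rightarrow> (nat \<Rightarrow> nat) \<Rightarrow> (nat \<Rightarrow> nat \<Rightarrow> nat) \<Rightarrow> nat \<Rightarrow> real mat" where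
  "Xmat n m a lev j = (if j = Suc m then mat n 1 (\<lambda>_. 1)
     else mat n (a j) (\<lambda>(u,t). if lev j u = t then 1 else 0))"

definition Xblock :: "nat \<Rightarrow> nat \<Rightarrow> (nat \<Rightarrow> nat) \<Rightarrow> (nat \<Rightarrow> nat \<Rightarrow> nat) \<Rightarrow> nat set \<Rightarrow> real mat" where
  "Xblock n m a lev S = mat_of_cols n (concat (map (\<lambda>j. cols (Xmat n m a lev j)) (sorted_list_of_set S)))"

definition PS :: "nat \<Rightarrow> nat \<Rightarrow> (nat \<Rightarrow> nat) \<Rightarrow> (nat \<Rightarrow> nat \<Rightarrow> nat) \<Rightarrow> nat set \<Rightarrow> real mat" where
  "PS n m a lev S = proj (Xblock n m a lev S)"

definition Cmat :: "nat \<Rightarrow> nat \<Rightarrow> (nat \<Rightarrow> nat) \<Rightarrow> (nat \<Rightarrow> nat \<Rightarrow> nat) \<Rightarrow> nat \<Rightarrow> nat set \<Rightarrow> real mat" where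
  "Cmat n m a lev i T = transpose_mat (Xmat n m a lev i) * (1\<^sub>m n - PS n m a lev T) * Xmat n m a lev i"

definition Qvec :: "nat \<Rightarrow> nat \<Rightarrow> (nat \<Rightarrow> nat) \<Rightarrow> (nat \<Rightarrow> nat \<Rightarrow> nat) \<Rightarrow> nat \<Rightarrow> nat set \<Rightarrow> real vec \<Rightarrow> real vec" where
  "Qvec n m a lev i T Y = transpose_mat (Xmat n m a lev i) *\<^sub>v ((1\<^sub>m n - PS n m a lev T) *\<^sub>v Y)"

definition SS :: "nat \<Rightarrow> nat \<Rightarrow> (nat \<Rightarrow> nat) \<Rightarrow> (nat \<Rightarrow> nat \<Rightarrow> nat) \<Rightarrow> nat \<Rightarrow> nat set \<Rightarrow> real vec \<Rightarrow> real" where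
  "SS n m a lev i T Y = Qvec n m a lev i T Y \<bullet> (ginv (Cmat n m a lev i T) *\<^sub>v Qvec n m a lev i T Y)"

definition Nmat :: "nat \<Rightarrow> nat \<Rightarrow> (nat \<Rightarrow> nat) \<Rightarrow> (nat \<Rightarrow> nat \<Rightarrow> nat) \<Rightarrow> nat \<Rightarrow> nat \<Rightarrow> real mat" where
  "Nmat n m a lev i j = transpose_mat (Xmat n m a lev i) * Xmat n m a lev j"

definition rvec :: "nat \<Rightarrow> nat \<Rightarrow> (nat \<Rightarrow> nat) \<Rightarrow> (nat \<Rightarrow> nat \<Rightarrow> nat) \<Rightarrow> nat \<Rightarrow> real vec" where
  "rvec n m a lev i = transpose_mat (Xmat n m a lev i) *\<^sub>v vec n (\<lambda>_. 1)"

(* R_i^{-1} = diag(r_i)^{-1}  (all r_i entries are positive when every level occurs) *)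
definition Rinv :: "nat \<Rightarrow> nat \<Rightarrow> (nat \<Rightarrow> nat) \<Rightarrow> (nat \<Rightarrow> nat \<Rightarrow> nat) \<Rightarrow> nat \<Rightarrow> real mat" where
  "Rinv n m a lev i = mat (a i) (a i) (\<lambda>(s,t). if s = t then 1 / (rvec n m a lev i $ s) else 0)"

end

theory Submission
  imports Defs "Jordan_Normal_Form.Gauss_Jordan_Elimination"
begin


lemma massoc: "dim_col A = dim_row B \<Longrightarrow> dim_col B = dim_row C \<Longrightarrow> (A * B) * C = A * (B * C)"
  by (rule assoc_mult_mat[of A "dim_row A" "dim_col A" B "dim_col B" C "dim_col C"], auto)

lemma mdistL: "dim_col A = dim_row B \<Longrightarrow> dim_row B = dim_row C \<Longrightarrow> dim_col B = dim_col C \<Longrightarrow>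
   A * (B - C) = A * B - A * (C :: 'a :: ring mat)"
  by (rule mult_minus_distrib_mat[of A "dim_row A" "dim_col A" B "dim_col B"], auto)

lemma mdistR: "dim_row A = dim_row B \<Longrightarrow> dim_col A = dim_col B \<Longrightarrow> dim_col A = dim_row C \<Longrightarrow>
   (A - B) * C = A * C - B * (C :: 'a :: ring mat)"
  by (rule minus_mult_distrib_mat[of A "dim_row A" "dim_col A" B C "dim_col C"], auto)

lemma one_multL: "dim_row A = n \<Longrightarrow> 1\<^sub>m n * A = (A :: 'a :: semiring_1 mat)"
  by (rule left_mult_one_mat[of A n "dim_col A"], auto)
lemma one_multR: "dim_col A = n \<Longrightarrow> A * 1\<^sub>m n = (A :: 'a :: semiring_1 mat)"
  by (rule right_mult_one_mat[of A "dim_row A" n], auto)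

lemma minus_eq0_iff: "dim_row A = dim_row B \<Longrightarrow> dim_col A = dim_col B \<Longrightarrow>
   (A - B = 0\<^sub>m (dim_row B) (dim_col B)) = (A = (B :: 'a :: ab_group_add mat))"
proof
  assume d: "dim_row A = dim_row B" "dim_col A = dim_col B" and z: "A - B = 0\<^sub>m (dim_row B) (dim_col B)"
  show "A = B"
  proof (rule eq_matI)
    fix i j assume ij: "i < dim_row B" "j < dim_col B"
    have "(A - B) $$ (i,j) = 0" using z ij by simp
    thus "A $$ (i,j) = B $$ (i,j)" using ij d by simp
  qed (insert d, auto)
qed (auto intro!: eq_matI)

lemma rref_ginv:
  fixes R :: "'a::field mat"
  assumes R: "R \<in> carrier_mat nr nc" and p: "pivot_fun R f nc"
  shows "\<exists>G \<in> carrier_mat nc nr. R * G * R = R"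
proof -
  define G where "G = mat nc nr (\<lambda>(j,l). if f l = j then 1 else (0::'a))"
  have dR: "dim_row R = nr" using R by auto
  note pD = pivot_funD[OF dR p]
  have RG: "(R * G) $$ (i,l) = (if l = i \<and> f i < nc then 1 else 0)" if i: "i < nr" and l: "l < nr" for i l
  proof -
    have "(R * G) $$ (i,l) = (\<Sum>j<nc. R $$ (i,j) * (if f l = j then 1 else 0))"
      using R i l by (simp add: G_def scalar_prod_def lessThan_atLeast0 row_def col_def)
    also have "\<dots> = (if f l < nc then R $$ (i, f l) else 0)"
      by (auto simp: sum.delta' if_distrib cong: if_cong)
    also have "\<dots> = (if l = i \<and> f i < nc then 1 else 0)"
      using pD(4)[OF i] pD(5)[OF l _ i] by auto
    finally show ?thesis .
  qed
  have "R * G * R = R"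
  proof (rule eq_matI)
    fix i k assume i: "i < dim_row R" and k: "k < dim_col R"
    have "(R * G * R) $$ (i,k) = (\<Sum>l<nr. (R * G) $$ (i,l) * R $$ (l,k))"
      using R i k by (simp add: G_def scalar_prod_def lessThan_atLeast0 row_def col_def)
    also have "\<dots> = (\<Sum>l<nr. (if l = i \<and> f i < nc then 1 else 0) * R $$ (l,k))"
      by (rule sum.cong, auto simp: RG i[unfolded dR])
    also have "\<dots> = (\<Sum>l<nr. if l = i then (if f i < nc then R $$ (i,k) else 0) else 0)"
      by (rule sum.cong, auto)
    also have "\<dots> = (if f i < nc then R $$ (i,k) else 0)"
      using i R by simp
    also have "\<dots> = R $$ (i,k)"
      using pD(1)[of i] pD(2)[of i k] i k R by fastforce
    finally show "(R * G * R) $$ (i,k) = R $$ (i,k)" .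
  qed (insert R, auto simp: G_def)
  moreover have "G \<in> carrier_mat nc nr" by (simp add: G_def)
  ultimately show ?thesis by blast
qed

lemma ginv_exists:
  fixes A :: "'a::field mat"
  assumes A: "A \<in> carrier_mat nr nc"
  shows "\<exists>G \<in> carrier_mat nc nr. A * G * A = A"
proof -
  obtain C where C: "gauss_jordan_single A = C" by auto
  note gj = gauss_jordan_single[OF A C]
  from gj(3) obtain f where p: "pivot_fun C f nc" using gj(2) unfolding row_echelon_form_def by auto
  from gj(4) obtain P Q where PQ: "C = P * A" "P \<in> carrier_mat nr nr" "Q \<in> carrier_mat nr nr" "P * Q = 1\<^sub>m nr" "Q * P = 1\<^sub>m nr" by auto
  obtain G' where G': "G' \<in> carrier_mat nc nr" "C * G' * C = C" using rref_ginv[OF gj(2) p] by auto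
  have QC: "Q * C = A" using PQ A by (simp add: assoc_mult_mat[symmetric])
  have "A * (G' * P) * A = Q * C * (G' * P) * (Q * C)" by (simp add: QC)
  also have "\<dots> = Q * (C * G' * (P * Q) * C)"
  proof -
    have c1: "Q * C \<in> carrier_mat nr nc" "G' * P \<in> carrier_mat nc nr" "C * G' \<in> carrier_mat nr nr"
      "P * Q \<in> carrier_mat nr nr"
      using PQ(2,3) G'(1) gj(2) by auto
    show ?thesis using PQ(2,3) G'(1) gj(2) by (simp add: massoc carrier_matD)
  qed
  also have "\<dots> = Q * C" using PQ(2-5) G' gj(2) by simp
  finally have "A * (G' * P) * A = A" using QC by simp
  moreover have "G' * P \<in> carrier_mat nc nr" using G' PQ by auto
  ultimately show ?thesis by blast
qed
lemma ginv_spec: "ginv M \<in> carrier_mat (dim_col M) (dim_row M)" "M * ginv M * M = M"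
proof -
  have "\<exists>G. G \<in> carrier_mat (dim_col M) (dim_row M) \<and> M * G * M = M"
    using ginv_exists[of M "dim_row M" "dim_col M"] by auto
  from someI_ex[OF this] show "ginv M \<in> carrier_mat (dim_col M) (dim_row M)" "M * ginv M * M = M"
    unfolding ginv_def by auto
qed

lemma gram_self_zero:
  fixes E :: "real mat"
  assumes E: "E \<in> carrier_mat n k" and z: "transpose_mat E * E = 0\<^sub>m k k"
  shows "E = 0\<^sub>m n k"
proof (rule eq_matI)
  fix u t assume u: "u < dim_row (0\<^sub>m n k)" and t: "t < dim_col (0\<^sub>m n k)"
  have "(transpose_mat E * E) $$ (t,t) = (\<Sum>v\<in>{0..<n}. (E $$ (v,t))^2)"
    using E u t by (simp add: scalar_prod_def power2_eq_square)
  hence s0: "(\<Sum>v\<in>{0..<n}. (E $$ (v,t))^2) = 0" using z t by simp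
  have "\<forall>v\<in>{0..<n}. (E $$ (v,t))^2 = 0"
    using sum_nonneg_eq_0_iff[of "{0..<n}" "\<lambda>v. (E $$ (v,t))^2"] s0 by simp
  thus "E $$ (u,t) = 0\<^sub>m n k $$ (u,t)" using u t by simp
qed (insert E, auto)

lemma gram_zero:
  fixes A :: "real mat"
  assumes A: "A \<in> carrier_mat n l" and H: "H \<in> carrier_mat l k" and E: "E = A * H"
    and z: "transpose_mat A * E = 0\<^sub>m l k"
  shows "E = 0\<^sub>m n k"
proof (rule gram_self_zero)
  show Ec: "E \<in> carrier_mat n k" using A H E by auto
  have "transpose_mat E * E = transpose_mat H * (transpose_mat A * E)"
    using A H Ec unfolding E by (simp add: transpose_mult massoc carrier_matD)
  also have "\<dots> = 0\<^sub>m k k" using z H by simp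
  finally show "transpose_mat E * E = 0\<^sub>m k k" .
qed

lemma ginv_AHM:
  fixes A :: "real mat"
  assumes A: "A \<in> carrier_mat n k" and H: "H \<in> carrier_mat k k"
    and g: "transpose_mat A * A * H * (transpose_mat A * A) = transpose_mat A * A"
  shows "A * H * (transpose_mat A * A) = A"
proof -
  define E where "E = A * H * (transpose_mat A * A) - A"
  have E': "E = A * (H * (transpose_mat A * A) - 1\<^sub>m k)"
    unfolding E_def using A H by (simp add: mdistL massoc carrier_matD one_multR)
  have "transpose_mat A * E = transpose_mat A * A * H * (transpose_mat A * A) - transpose_mat A * A"
    unfolding E_def using A H by (simp add: mdistL massoc carrier_matD)
  also have "\<dots> = 0\<^sub>m k k" unfolding g using A by (intro eq_matI) auto
  moreover have "H * (transpose_mat A * A) - 1\<^sub>m k \<in> carrier_mat k k" using A H by auto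
  ultimately have "E = 0\<^sub>m n k" using gram_zero[OF A _ E'] by auto
  thus ?thesis unfolding E_def using A H minus_eq0_iff[of "A * H * (transpose_mat A * A)" A] by auto
qed

lemma transpose_mult_dim: "dim_col A = dim_row B \<Longrightarrow> transpose_mat (A * B) = transpose_mat B * transpose_mat (A :: 'a :: comm_semiring_0 mat)"
  by (rule transpose_mult[of A "dim_row A" "dim_col A" B "dim_col B"], auto)

lemma proj_alt:
  fixes A :: "real mat"
  assumes A: "A \<in> carrier_mat n k" and H: "H \<in> carrier_mat k k"
    and g: "transpose_mat A * A * H * (transpose_mat A * A) = transpose_mat A * A"
  shows "proj A = A * H * transpose_mat A"
proof -
  let ?M = "transpose_mat A * A"
  define G where "G = ginv ?M"
  have G: "G \<in> carrier_mat k k" using ginv_spec(1)[of ?M] A unfolding G_def by auto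
  have MG: "?M * G * ?M = ?M" using ginv_spec(2) unfolding G_def by auto
  have MT: "transpose_mat ?M = ?M" using A by (simp add: transpose_mult_dim)
  have "transpose_mat (?M * G * ?M) = ?M * transpose_mat G * ?M"
    using A G by (simp add: transpose_mult_dim massoc carrier_matD)
  hence MGT: "?M * transpose_mat G * ?M = ?M" using MG MT by simp
  have AGT: "A * transpose_mat G * ?M = A" using ginv_AHM[OF A _ MGT] G by simp
  have "transpose_mat (A * transpose_mat G * ?M) = ?M * G * transpose_mat A"
    using A G by (simp add: transpose_mult_dim massoc carrier_matD)
  hence MGA: "?M * G * transpose_mat A = transpose_mat A" using AGT by simp
  have AHM: "A * H * ?M = A" using ginv_AHM[OF A H g] .
  have "A * H * transpose_mat A = A * H * (?M * G * transpose_mat A)" using MGA by simp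
  also have "\<dots> = (A * H * ?M) * G * transpose_mat A"
    using A G H by (simp add: massoc carrier_matD)
  also have "\<dots> = A * G * transpose_mat A" using AHM by simp
  finally show ?thesis unfolding proj_def G_def by simp
qed

lemma proj_props:
  fixes A :: "real mat"
  assumes A: "A \<in> carrier_mat n k"
  shows "proj A \<in> carrier_mat n n" "transpose_mat (proj A) = proj A"
    "proj A * proj A = proj A" "proj A * A = A"
proof -
  let ?M = "transpose_mat A * A"
  define G where "G = ginv ?M"
  have G: "G \<in> carrier_mat k k" using ginv_spec(1)[of ?M] A unfolding G_def by auto
  have MG: "?M * G * ?M = ?M" using ginv_spec(2) unfolding G_def by auto
  have MT: "transpose_mat ?M = ?M" using A by (simp add: transpose_mult_dim)
  have "transpose_mat (?M * G * ?M) = ?M * transpose_mat G * ?M"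
    using A G by (simp add: transpose_mult_dim massoc carrier_matD)
  hence MGT: "?M * transpose_mat G * ?M = ?M" using MG MT by simp
  have P: "proj A = A * G * transpose_mat A" unfolding proj_def G_def ..
  have P2: "proj A = A * transpose_mat G * transpose_mat A" using proj_alt[OF A _ MGT] G by simp
  have AGM: "A * G * ?M = A" using ginv_AHM[OF A G MG] .
  have "transpose_mat (A * G * ?M) = ?M * transpose_mat G * transpose_mat A"
    using A G by (simp add: transpose_mult_dim massoc carrier_matD)
  hence MGA: "?M * transpose_mat G * transpose_mat A = transpose_mat A" using AGM by simp
  show Pc: "proj A \<in> carrier_mat n n" unfolding P using A G by auto
  have "transpose_mat (A * transpose_mat G * transpose_mat A) = A * G * transpose_mat A"
    using A G by (simp add: transpose_mult_dim massoc carrier_matD)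
  thus "transpose_mat (proj A) = proj A" using P P2 by metis
  show "proj A * proj A = proj A"
  proof -
    have "(A * G * transpose_mat A) * (A * transpose_mat G * transpose_mat A) = A * G * (transpose_mat A * A * transpose_mat G * transpose_mat A)"
      using A G by (simp add: massoc carrier_matD)
    also have "\<dots> = A * G * transpose_mat A" unfolding MGA ..
    finally show ?thesis using P P2 by metis
  qed
  show "proj A * A = A" unfolding P using AGM A G by (simp add: massoc carrier_matD)
qed

lemma massocv: "dim_col A = dim_row B \<Longrightarrow> dim_col B = dim_vec v \<Longrightarrow> (A * B) *\<^sub>v v = A *\<^sub>v (B *\<^sub>v v)"
  by (rule assoc_mult_mat_vec[of A "dim_row A" "dim_col A" B "dim_col B"], auto)

lemma ginv_dims[simp]: "dim_row (ginv M) = dim_col M" "dim_col (ginv M) = dim_row M"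
  using ginv_spec(1)[of M] by auto

lemma col_mult_vec: "A \<in> carrier_mat n k \<Longrightarrow> B \<in> carrier_mat k l \<Longrightarrow> t < l \<Longrightarrow> col (A * B) t = A *\<^sub>v col B t"
  by (rule eq_vecI, auto)

lemma col_unit: "(A :: real mat) \<in> carrier_mat n k \<Longrightarrow> t < k \<Longrightarrow> col A t = A *\<^sub>v unit_vec k (t::nat)"
  by (rule eq_vecI, auto)

lemma proj_fix:
  fixes A B :: "real mat"
  assumes A: "A \<in> carrier_mat n k" and B: "B \<in> carrier_mat n l"
    and c: "\<And>t. t < l \<Longrightarrow> \<exists>c\<in>carrier_vec k. col B t = A *\<^sub>v c"
  shows "proj A * B = B"
proof (rule mat_col_eqI)
  fix t assume t: "t < dim_col B"
  obtain v where v: "v \<in> carrier_vec k" "col B t = A *\<^sub>v v" using c t B by auto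
  have P: "proj A \<in> carrier_mat n n" "proj A * A = A" using proj_props[OF A] by auto
  have "col (proj A * B) t = proj A *\<^sub>v col B t" using col_mult_vec[OF P(1) B] t B by auto
  also have "\<dots> = (proj A * A) *\<^sub>v v" using massocv[of "proj A" A v] v P(1) A by (auto simp: carrier_matD carrier_vecD)
  also have "\<dots> = col B t" using v P by simp
  finally show "col (proj A * B) t = col B t" .
qed (insert A B proj_props[OF A], auto)

lemma proj_absorb:
  fixes A B :: "real mat"
  assumes A: "A \<in> carrier_mat n k" and B: "B \<in> carrier_mat n l" and f: "proj A * B = B"
  shows "proj A * proj B = proj B"
proof -
  have G: "ginv (transpose_mat B * B) \<in> carrier_mat l l" using ginv_spec(1)[of "transpose_mat B * B"] B by auto
  have P: "proj A \<in> carrier_mat n n" using proj_props[OF A] by auto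
  have "proj A * proj B = (proj A * B) * ginv (transpose_mat B * B) * transpose_mat B"
    unfolding proj_def[of B] using P B G by (simp add: massoc carrier_matD)
  also have "\<dots> = proj B" by (simp only: f proj_def[of B])
  finally show ?thesis .
qed

lemma proj_eq:
  fixes A B :: "real mat"
  assumes A: "A \<in> carrier_mat n k" and B: "B \<in> carrier_mat n l"
    and f1: "proj A * B = B" and f2: "proj B * A = A"
  shows "proj A = proj B"
proof -
  note pa = proj_props[OF A] and pb = proj_props[OF B]
  have 1: "proj A * proj B = proj B" by (rule proj_absorb[OF A B f1])
  have 2: "proj B * proj A = proj A" by (rule proj_absorb[OF B A f2])
  have "proj A = transpose_mat (proj B * proj A)" using 2 pa by simp
  also have "\<dots> = proj A * proj B" using pa pb by (simp add: transpose_mult_dim carrier_matD)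
  finally show ?thesis using 1 by simp
qed

lemma quad_proj:
  fixes Z :: "real mat"
  assumes Z: "Z \<in> carrier_mat n k" and Y: "Y \<in> carrier_vec n"
  shows "(transpose_mat Z *\<^sub>v Y) \<bullet> (ginv (transpose_mat Z * Z) *\<^sub>v (transpose_mat Z *\<^sub>v Y)) = Y \<bullet> (proj Z *\<^sub>v Y)"
proof -
  have G: "ginv (transpose_mat Z * Z) \<in> carrier_mat k k" using ginv_spec(1)[of "transpose_mat Z * Z"] Z by auto
  have "(transpose_mat Z *\<^sub>v Y) \<bullet> (ginv (transpose_mat Z * Z) *\<^sub>v (transpose_mat Z *\<^sub>v Y))
     = Y \<bullet> (Z *\<^sub>v (ginv (transpose_mat Z * Z) *\<^sub>v (transpose_mat Z *\<^sub>v Y)))"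
    by (rule transpose_vec_mult_scalar[OF Z _ Y], insert G Z Y, auto)
  also have "Z *\<^sub>v (ginv (transpose_mat Z * Z) *\<^sub>v (transpose_mat Z *\<^sub>v Y)) = proj Z *\<^sub>v Y"
    unfolding proj_def using G Z Y by (simp add: massocv massoc carrier_matD carrier_vecD)
  finally show ?thesis .
qed

lemma unit_quad: "(P :: real mat) \<in> carrier_mat n n \<Longrightarrow> s < n \<Longrightarrow> t < n \<Longrightarrow> unit_vec n s \<bullet> (P *\<^sub>v unit_vec n t) = P $$ (s,t)"
  by simp

lemma polar:
  fixes P1 P2 :: "real mat"
  assumes P: "P1 \<in> carrier_mat n n" "P2 \<in> carrier_mat n n"
    and S: "transpose_mat P1 = P1" "transpose_mat P2 = P2"
    and q: "\<And>Y. Y \<in> carrier_vec n \<Longrightarrow> Y \<bullet> (P1 *\<^sub>v Y) = Y \<bullet> (P2 *\<^sub>v Y)"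
  shows "P1 = P2"
proof (rule eq_matI)
  fix s t assume s: "s < dim_row P2" and t: "t < dim_col P2"
  hence s: "s < n" and t: "t < n" using P by auto
  let ?es = "unit_vec n s" and ?et = "unit_vec n t"
  have sym: "x \<bullet> (P *\<^sub>v y) = y \<bullet> (P *\<^sub>v x)" if "(P :: real mat) \<in> carrier_mat n n" "transpose_mat P = P"
    "x \<in> carrier_vec n" "y \<in> carrier_vec n" for P x y
  proof -
    have "y \<bullet> (P *\<^sub>v x) = (transpose_mat P *\<^sub>v y) \<bullet> x" using transpose_vec_mult_scalar[of P n n x y] that by simp
    also have "\<dots> = x \<bullet> (P *\<^sub>v y)" using that by (simp add: comm_scalar_prod[of _ n])
    finally show ?thesis by simp
  qed
  have exp: "(?es + ?et) \<bullet> (P *\<^sub>v (?es + ?et)) = P $$ (s,s) + 2 * P $$ (s,t) + P $$ (t,t)"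
    if "(P :: real mat) \<in> carrier_mat n n" "transpose_mat P = P" for P
  proof -
    have "(?es + ?et) \<bullet> (P *\<^sub>v (?es + ?et)) = ?es \<bullet> (P *\<^sub>v ?es) + ?es \<bullet> (P *\<^sub>v ?et) + (?et \<bullet> (P *\<^sub>v ?es) + ?et \<bullet> (P *\<^sub>v ?et))"
      using that by (simp add: mult_add_distrib_mat_vec[of P n n] add_scalar_prod_distrib[of _ n] scalar_prod_add_distrib[of _ n])
    also have "?et \<bullet> (P *\<^sub>v ?es) = ?es \<bullet> (P *\<^sub>v ?et)" using sym[OF that] by simp
    finally show ?thesis using that s t by simp
  qed
  have "P1 $$ (s,s) = P2 $$ (s,s)" "P1 $$ (t,t) = P2 $$ (t,t)" using q[of ?es] q[of ?et] P s t by auto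
  moreover have "P1 $$ (s,s) + 2 * P1 $$ (s,t) + P1 $$ (t,t) = P2 $$ (s,s) + 2 * P2 $$ (s,t) + P2 $$ (t,t)"
    using exp[OF P(1) S(1)] exp[OF P(2) S(2)] q[of "?es + ?et"] by simp
  ultimately show "P1 $$ (s,t) = P2 $$ (s,t)" by simp
qed (insert P, auto)



lemma X_carrier: "Xmat n m a lev j \<in> carrier_mat n (if j = Suc m then 1 else a j)"
  by (simp add: Xmat_def)

lemma X_dims[simp]: "dim_row (Xmat n m a lev j) = n"
  by (simp add: Xmat_def)

definition XL where "XL n m a lev T = concat (map (\<lambda>j. cols (Xmat n m a lev j)) (sorted_list_of_set T))"

lemma XL_carrier: "set (XL n m a lev T) \<subseteq> carrier_vec n"
  unfolding XL_def using cols_dim[of "Xmat n m a lev _"] by auto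

lemma Xblock_carrier: "Xblock n m a lev T \<in> carrier_mat n (length (XL n m a lev T))"
  unfolding Xblock_def XL_def by simp

lemma Xblock_dims[simp]: "dim_row (Xblock n m a lev T) = n" "dim_col (Xblock n m a lev T) = length (XL n m a lev T)"
  unfolding Xblock_def XL_def by simp_all

lemma Xblock_cols: "cols (Xblock n m a lev T) = XL n m a lev T"
  unfolding Xblock_def XL_def[symmetric] using XL_carrier by simp

lemma set_cols: "v \<in> set (cols A) \<longleftrightarrow> (\<exists>t < dim_col A. v = col A t)"
  unfolding cols_def by auto

lemma set_XL: "finite T \<Longrightarrow> set (XL n m a lev T) = (\<Union>j\<in>T. set (cols (Xmat n m a lev j)))"
  unfolding XL_def by auto

lemma col_in_block:
  assumes T: "finite T" "j \<in> T" and t: "t < dim_col (Xmat n m a lev j)"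
  shows "\<exists>c \<in> carrier_vec (dim_col (Xblock n m a lev T)). col (Xmat n m a lev j) t = Xblock n m a lev T *\<^sub>v c"
proof -
  have "col (Xmat n m a lev j) t \<in> set (cols (Xmat n m a lev j))" using t unfolding set_cols by blast
  hence "col (Xmat n m a lev j) t \<in> set (cols (Xblock n m a lev T))"
    unfolding Xblock_cols set_XL[OF T(1)] using T by blast
  then obtain k where k: "k < dim_col (Xblock n m a lev T)" "col (Xmat n m a lev j) t = col (Xblock n m a lev T) k"
    unfolding set_cols by blast
  have "col (Xblock n m a lev T) k = Xblock n m a lev T *\<^sub>v unit_vec (dim_col (Xblock n m a lev T)) k"
    using col_unit[of "Xblock n m a lev T" n "dim_col (Xblock n m a lev T)" k] k(1) carrier_matI[of "Xblock n m a lev T" n "dim_col (Xblock n m a lev T)"]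
    by simp
  moreover have "unit_vec (dim_col (Xblock n m a lev T)) k \<in> carrier_vec (dim_col (Xblock n m a lev T))" by simp
  ultimately show ?thesis using k(2) by metis
qed

lemma block_col:
  assumes T: "finite T" and k: "k < dim_col (Xblock n m a lev T)"
  shows "\<exists>j\<in>T. \<exists>t < dim_col (Xmat n m a lev j). col (Xblock n m a lev T) k = col (Xmat n m a lev j) t"
proof -
  have "col (Xblock n m a lev T) k \<in> set (cols (Xblock n m a lev T))" using k unfolding set_cols by blast
  then obtain j where j: "j \<in> T" "col (Xblock n m a lev T) k \<in> set (cols (Xmat n m a lev j))"
    unfolding Xblock_cols set_XL[OF T] by blast
  from j(2) obtain t where "t < dim_col (Xmat n m a lev j)" "col (Xblock n m a lev T) k = col (Xmat n m a lev j) t"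
    unfolding set_cols by blast
  thus ?thesis using j(1) by blast
qed

lemma PS_props:
  shows "PS n m a lev T \<in> carrier_mat n n" "transpose_mat (PS n m a lev T) = PS n m a lev T"
    "PS n m a lev T * PS n m a lev T = PS n m a lev T"
  unfolding PS_def using proj_props[OF Xblock_carrier] by auto

lemma PS_dims[simp]: "dim_row (PS n m a lev T) = n" "dim_col (PS n m a lev T) = n"
  using PS_props(1)[of n m a lev T] by auto

lemma PS_fix:
  assumes T: "finite T" "j \<in> T"
  shows "PS n m a lev T * Xmat n m a lev j = Xmat n m a lev j"
  unfolding PS_def
proof (rule proj_fix[OF Xblock_carrier X_carrier])
  fix t assume t: "t < (if j = Suc m then 1 else a j)"
  hence "t < dim_col (Xmat n m a lev j)" by (auto simp: Xmat_def split: if_splits)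
  from col_in_block[OF T this] show "\<exists>c\<in>carrier_vec (length (XL n m a lev T)). col (Xmat n m a lev j) t = Xblock n m a lev T *\<^sub>v c"
    by simp
qed

lemma PS_absorb:
  assumes T: "finite T1" "T2 \<subseteq> T1"
  shows "PS n m a lev T1 * PS n m a lev T2 = PS n m a lev T2"
  unfolding PS_def
proof (rule proj_absorb[OF Xblock_carrier Xblock_carrier], rule proj_fix[OF Xblock_carrier Xblock_carrier])
  fix k assume k: "k < length (XL n m a lev T2)"
  have f2: "finite T2" using T finite_subset by auto
  obtain j t where jt: "j \<in> T2" "t < dim_col (Xmat n m a lev j)" "col (Xblock n m a lev T2) k = col (Xmat n m a lev j) t"
    using block_col[OF f2, where k=k and n=n and m=m and a=a and lev=lev] k by auto
  show "\<exists>c\<in>carrier_vec (length (XL n m a lev T1)). col (Xblock n m a lev T2) k = Xblock n m a lev T1 *\<^sub>v c"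
    using col_in_block[OF T(1) _ jt(2)] jt T by auto
qed

lemma block_orth:
  fixes Z :: "real mat"
  assumes T: "finite T" and Z: "Z \<in> carrier_mat n l"
    and o: "\<And>j. j \<in> T \<Longrightarrow> transpose_mat (Xmat n m a lev j) * Z = 0\<^sub>m (dim_col (Xmat n m a lev j)) l"
  shows "transpose_mat (Xblock n m a lev T) * Z = 0\<^sub>m (dim_col (Xblock n m a lev T)) l"
proof (rule eq_matI)
  fix k u assume k: "k < dim_row (0\<^sub>m (dim_col (Xblock n m a lev T)) l)" and u: "u < dim_col (0\<^sub>m (dim_col (Xblock n m a lev T)) l)"
  obtain j t where jt: "j \<in> T" "t < dim_col (Xmat n m a lev j)" "col (Xblock n m a lev T) k = col (Xmat n m a lev j) t"
    using block_col[OF T, where k=k and n=n and m=m and a=a and lev=lev] k by auto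
  have "(transpose_mat (Xblock n m a lev T) * Z) $$ (k,u) = col (Xmat n m a lev j) t \<bullet> col Z u"
    using k u Z jt by simp
  also have "\<dots> = (transpose_mat (Xmat n m a lev j) * Z) $$ (t,u)" using jt u Z by simp
  also have "\<dots> = 0" using o[OF jt(1)] jt u by simp
  finally show "(transpose_mat (Xblock n m a lev T) * Z) $$ (k,u) = 0\<^sub>m (dim_col (Xblock n m a lev T)) l $$ (k,u)"
    using k u by simp
qed (insert Z, simp_all)


lemma idem_compl:
  fixes P :: "real mat"
  assumes P: "P \<in> carrier_mat n n" "P * P = P"
  shows "(1\<^sub>m n - P) * (1\<^sub>m n - P) = 1\<^sub>m n - P"
proof -
  have "(1\<^sub>m n - P) * (1\<^sub>m n - P) = (1\<^sub>m n - P) - (P - P * P)"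
    using P(1) by (simp add: mdistL mdistR one_multL one_multR carrier_matD)
  also have "\<dots> = 1\<^sub>m n - P" unfolding P(2) using P(1) by (intro eq_matI) auto
  finally show ?thesis .
qed

lemma SS_eq:
  assumes Y: "Y \<in> carrier_vec n"
  shows "SS n m a lev i T Y = Y \<bullet> (proj ((1\<^sub>m n - PS n m a lev T) * Xmat n m a lev i) *\<^sub>v Y)"
proof -
  let ?X = "Xmat n m a lev i" and ?P = "PS n m a lev T"
  let ?W = "1\<^sub>m n - ?P"
  obtain k where X: "?X \<in> carrier_mat n k" using X_carrier by blast
  note PP = PS_props[of n m a lev T]
  have W: "?W \<in> carrier_mat n n" using PP by auto
  have WT: "transpose_mat ?W = ?W" using PP by (simp add: transpose_minus[of _ n n])
  have WW: "?W * ?W = ?W" using idem_compl PP by auto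
  have ZT: "transpose_mat (?W * ?X) = transpose_mat ?X * ?W"
    using transpose_mult[OF W X] WT by simp
  have Q: "Qvec n m a lev i T Y = transpose_mat (?W * ?X) *\<^sub>v Y"
    unfolding Qvec_def ZT using W X Y by (simp add: massocv carrier_matD carrier_vecD)
  have "Cmat n m a lev i T = transpose_mat ?X * (?W * ?W) * ?X" unfolding Cmat_def WW ..
  also have "\<dots> = transpose_mat (?W * ?X) * (?W * ?X)" unfolding ZT
    using W X by (simp add: massoc carrier_matD)
  finally have C: "Cmat n m a lev i T = transpose_mat (?W * ?X) * (?W * ?X)" .
  have "SS n m a lev i T Y = (transpose_mat (?W * ?X) *\<^sub>v Y) \<bullet> (ginv (transpose_mat (?W * ?X) * (?W * ?X)) *\<^sub>v (transpose_mat (?W * ?X) *\<^sub>v Y))"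
    unfolding SS_def Q C ..
  also have "\<dots> = Y \<bullet> (proj (?W * ?X) *\<^sub>v Y)"
    by (rule quad_proj[OF _ Y], insert W X, auto)
  finally show ?thesis .
qed


lemma main_general:
  assumes T: "finite T1" "T2 \<subseteq> T1"
  shows "(\<forall>Y\<in>carrier_vec n. SS n m a lev i T1 Y = SS n m a lev i T2 Y) \<longleftrightarrow>
    (\<forall>j\<in>T1. transpose_mat (Xmat n m a lev j) * (1\<^sub>m n - PS n m a lev T2) * Xmat n m a lev i
        = 0\<^sub>m (dim_col (Xmat n m a lev j)) (dim_col (Xmat n m a lev i)))"
proof -
  let ?X = "Xmat n m a lev" and ?P1 = "PS n m a lev T1" and ?P2 = "PS n m a lev T2"
  let ?Xi = "?X i"
  define ki where "ki = dim_col ?Xi"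
  have Xi: "?Xi \<in> carrier_mat n ki" unfolding ki_def by (rule carrier_matI) simp_all
  let ?Z1 = "(1\<^sub>m n - ?P1) * ?Xi" and ?Z2 = "(1\<^sub>m n - ?P2) * ?Xi"
  note P1 = PS_props[of n m a lev T1] and P2 = PS_props[of n m a lev T2]
  have Z1: "?Z1 \<in> carrier_mat n ki" and Z2: "?Z2 \<in> carrier_mat n ki" using Xi P1 P2 by auto
  have Z1e: "?Z1 = ?Xi - ?P1 * ?Xi" using Xi by (simp add: mdistR one_multL carrier_matD)
  have Z2e: "?Z2 = ?Xi - ?P2 * ?Xi" using Xi by (simp add: mdistR one_multL carrier_matD)
  have f2: "finite T2" using T finite_subset by auto
  show ?thesis
  proof
    assume H: "\<forall>Y\<in>carrier_vec n. SS n m a lev i T1 Y = SS n m a lev i T2 Y"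
    have PZ: "proj ?Z1 = proj ?Z2"
      by (rule polar[OF proj_props(1)[OF Z1] proj_props(1)[OF Z2] proj_props(2)[OF Z1] proj_props(2)[OF Z2]],
          insert H, auto simp: SS_eq)
    define G where "G = ginv (transpose_mat ?Z1 * ?Z1)"
    have G: "G \<in> carrier_mat ki ki" unfolding G_def using Z1 ginv_spec(1)[of "transpose_mat ?Z1 * ?Z1"] by (simp add: ki_def)
    have "?Z2 = proj ?Z2 * ?Z2" using proj_props(4)[OF Z2] by simp
    also have "\<dots> = proj ?Z1 * ?Z2" using PZ by simp
    also have "\<dots> = ?Z1 * (G * (transpose_mat ?Z1 * ?Z2))"
      unfolding proj_def[of ?Z1] G_def[symmetric] using carrier_matD[OF Z1] carrier_matD[OF Z2] carrier_matD[OF G] by (simp add: massoc)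
    finally have Z2f: "?Z2 = ?Z1 * (G * (transpose_mat ?Z1 * ?Z2))" .
    show "\<forall>j\<in>T1. transpose_mat (?X j) * (1\<^sub>m n - ?P2) * ?Xi = 0\<^sub>m (dim_col (?X j)) (dim_col ?Xi)"
    proof
      fix j assume j: "j \<in> T1"
      define kj where "kj = dim_col (?X j)"
      have Xj: "?X j \<in> carrier_mat n kj" unfolding kj_def by (rule carrier_matI) simp_all
      have "transpose_mat (?X j) * ?P1 = transpose_mat (?P1 * ?X j)"
        using transpose_mult[OF P1(1) Xj] P1(2) by simp
      also have "\<dots> = transpose_mat (?X j)" using PS_fix[OF T(1) j] by simp
      finally have XP: "transpose_mat (?X j) * ?P1 = transpose_mat (?X j)" .
      have "transpose_mat (?X j) * (1\<^sub>m n - ?P1) = transpose_mat (?X j) - transpose_mat (?X j) * ?P1"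
        using Xj by (simp add: mdistL one_multR carrier_matD)
      also have "\<dots> = 0\<^sub>m kj n" unfolding XP using Xj by (intro eq_matI) auto
      finally have XW: "transpose_mat (?X j) * (1\<^sub>m n - ?P1) = 0\<^sub>m kj n" .
      have XZ1: "transpose_mat (?X j) * ?Z1 = 0\<^sub>m kj ki"
      proof -
        have "transpose_mat (?X j) * ?Z1 = (transpose_mat (?X j) * (1\<^sub>m n - ?P1)) * ?Xi"
          using Xj Xi by (simp add: massoc carrier_matD)
        thus ?thesis unfolding XW using Xi by simp
      qed
      have "transpose_mat (?X j) * (1\<^sub>m n - ?P2) * ?Xi = transpose_mat (?X j) * ?Z2"
        using Xj Xi by (simp add: massoc carrier_matD)
      also have "\<dots> = (transpose_mat (?X j) * ?Z1) * (G * (transpose_mat ?Z1 * ?Z2))"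
        apply (subst Z2f) using carrier_matD[OF Xj] carrier_matD[OF Z1] carrier_matD[OF Z2] carrier_matD[OF G] by (simp add: massoc)
      also have "\<dots> = 0\<^sub>m kj ki" unfolding XZ1 using G Z1 Z2 by (simp add: ki_def)
      finally show "transpose_mat (?X j) * (1\<^sub>m n - ?P2) * ?Xi = 0\<^sub>m (dim_col (?X j)) (dim_col ?Xi)"
        unfolding kj_def ki_def .
    qed
  next
    assume H: "\<forall>j\<in>T1. transpose_mat (?X j) * (1\<^sub>m n - ?P2) * ?Xi = 0\<^sub>m (dim_col (?X j)) (dim_col ?Xi)"
    have o: "transpose_mat (?X j) * ?Z2 = 0\<^sub>m (dim_col (?X j)) ki" if j: "j \<in> T1" for j
    proof -
      have Xj: "?X j \<in> carrier_mat n (dim_col (?X j))" by (rule carrier_matI) simp_all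
      have "transpose_mat (?X j) * ?Z2 = transpose_mat (?X j) * (1\<^sub>m n - ?P2) * ?Xi"
        using Xj Xi by (simp add: massoc carrier_matD)
      thus ?thesis using H j unfolding ki_def by simp
    qed
    have BO: "transpose_mat (Xblock n m a lev T1) * ?Z2 = 0\<^sub>m (dim_col (Xblock n m a lev T1)) ki"
      by (rule block_orth[OF T(1) Z2 o])
    define B where "B = Xblock n m a lev T1"
    define G where "G = ginv (transpose_mat B * B)"
    have B: "B \<in> carrier_mat n (dim_col B)" by (rule carrier_matI) (simp_all add: B_def)
    have G: "G \<in> carrier_mat (dim_col B) (dim_col B)" unfolding G_def using ginv_spec(1)[of "transpose_mat B * B"] by simp
    have "?P1 * ?Z2 = B * G * (transpose_mat B * ?Z2)"
      unfolding PS_def proj_def B_def[symmetric] G_def[symmetric] using carrier_matD[OF B] carrier_matD[OF G] carrier_matD[OF Z2] by (simp add: massoc)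
    also have "\<dots> = B * G * 0\<^sub>m (dim_col B) ki" using BO[folded B_def] by simp
    also have "\<dots> = 0\<^sub>m n ki" using carrier_matD[OF G] by (simp add: B_def)
    finally have PZ2: "?P1 * ?Z2 = 0\<^sub>m n ki" .
    have "?P1 * ?Z2 = ?P1 * ?Xi - ?P1 * (?P2 * ?Xi)" unfolding Z2e using Xi by (simp add: mdistL carrier_matD)
    also have "?P1 * (?P2 * ?Xi) = ?P2 * ?Xi"
      using PS_absorb[OF T, of n m a lev] assoc_mult_mat[OF P1(1) P2(1) Xi] by simp
    finally have "?P1 * ?Xi - ?P2 * ?Xi = 0\<^sub>m n ki" using PZ2 by simp
    hence "?P1 * ?Xi = ?P2 * ?Xi" using minus_eq0_iff[of "?P1 * ?Xi" "?P2 * ?Xi"] Xi by auto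
    hence ZZ: "?Z1 = ?Z2" unfolding Z1e Z2e by simp
    show "\<forall>Y\<in>carrier_vec n. SS n m a lev i T1 Y = SS n m a lev i T2 Y"
      by (auto simp: SS_eq ZZ)
  qed
qed



lemma XW_zero:
  assumes T: "finite T" "j \<in> T"
  shows "transpose_mat (Xmat n m a lev j) * (1\<^sub>m n - PS n m a lev T) * Xmat n m a lev i
        = 0\<^sub>m (dim_col (Xmat n m a lev j)) (dim_col (Xmat n m a lev i))"
proof -
  let ?X = "Xmat n m a lev" and ?P1 = "PS n m a lev T"
  define kj where "kj = dim_col (?X j)"
  have Xj: "?X j \<in> carrier_mat n kj" unfolding kj_def by (rule carrier_matI) simp_all
  note P1 = PS_props[of n m a lev T]
  have "transpose_mat (?X j) * ?P1 = transpose_mat (?P1 * ?X j)"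
    using transpose_mult[OF P1(1) Xj] P1(2) by simp
  also have "\<dots> = transpose_mat (?X j)" using PS_fix[OF T] by simp
  finally have XP: "transpose_mat (?X j) * ?P1 = transpose_mat (?X j)" .
  have "transpose_mat (?X j) * (1\<^sub>m n - ?P1) = transpose_mat (?X j) - transpose_mat (?X j) * ?P1"
    using Xj by (simp add: mdistL one_multR carrier_matD)
  also have "\<dots> = 0\<^sub>m kj n" unfolding XP using Xj by (intro eq_matI) auto
  finally have XW: "transpose_mat (?X j) * (1\<^sub>m n - ?P1) = 0\<^sub>m kj n" .
  thus ?thesis unfolding kj_def by simp
qed

lemma triple_entry:
  fixes A M B :: "real mat"
  assumes A: "A \<in> carrier_mat p n" and M: "M \<in> carrier_mat n n'" and B: "B \<in> carrier_mat n' q"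
    and s: "s < p" and t: "t < q"
  shows "(A * M * B) $$ (s,t) = (\<Sum>u<n. \<Sum>v<n'. A $$ (s,u) * M $$ (u,v) * B $$ (v,t))"
proof -
  have "(A * M * B) $$ (s,t) = (\<Sum>u<n. A $$ (s,u) * (\<Sum>v<n'. M $$ (u,v) * B $$ (v,t)))"
    using A M B s t by (simp add: scalar_prod_def lessThan_atLeast0 row_def col_def)
  also have "\<dots> = (\<Sum>u<n. \<Sum>v<n'. A $$ (s,u) * M $$ (u,v) * B $$ (v,t))"
    by (simp add: sum_distrib_left mult.assoc)
  finally show ?thesis .
qed

lemma Xblock_single: "Xblock n m a lev {j} = Xmat n m a lev j"
  unfolding Xblock_def using mat_of_cols_cols[of "Xmat n m a lev j"] by simp

lemma X_last: "Xmat n m a lev (Suc m) = mat n 1 (\<lambda>_. 1)"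
  unfolding Xmat_def by simp

lemma X_reg: "j \<noteq> Suc m \<Longrightarrow> Xmat n m a lev j = mat n (a j) (\<lambda>(u,t). if lev j u = t then 1 else 0)"
  unfolding Xmat_def by simp

lemma P_last: "u < n \<Longrightarrow> v < n \<Longrightarrow> PS n m a lev {Suc m} $$ (u,v) = 1 / real n"
proof -
  assume uv: "u < n" "v < n"
  let ?O = "mat n 1 (\<lambda>_. 1) :: real mat"
  let ?H = "mat 1 1 (\<lambda>_. 1 / real n) :: real mat"
  have OO: "transpose_mat ?O * ?O = mat 1 1 (\<lambda>_. real n)"
    by (rule eq_matI, auto simp: scalar_prod_def)
  have g: "transpose_mat ?O * ?O * ?H * (transpose_mat ?O * ?O) = transpose_mat ?O * ?O"
    unfolding OO by (rule eq_matI, auto simp: scalar_prod_def)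
  have "PS n m a lev {Suc m} = ?O * ?H * transpose_mat ?O"
    unfolding PS_def Xblock_single X_last by (rule proj_alt[OF _ _ g], auto)
  also have "(?O * ?H * transpose_mat ?O) $$ (u,v) = 1 / real n"
    using uv by (simp add: scalar_prod_def)
  finally show ?thesis .
qed

lemma sum_center:
  fixes x y :: "nat \<Rightarrow> real"
  shows "(\<Sum>u<n. \<Sum>v<n. x u * ((if u = v then 1 else 0) - c) * y v) = (\<Sum>u<n. x u * y u) - c * (\<Sum>u<n. x u) * (\<Sum>v<n. y v)"
proof -
  have "(\<Sum>u<n. \<Sum>v<n. x u * ((if u = v then 1 else 0) - c) * y v)
      = (\<Sum>u<n. (\<Sum>v<n. (if u = v then x u * y v else 0)) - (\<Sum>v<n. c * x u * y v))"
  proof (intro sum.cong refl)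
    fix u assume "u \<in> {..<n}"
    have "\<And>v. x u * ((if u = v then 1 else 0) - c) * y v = (if u = v then x u * y v else 0) - c * x u * y v"
      by (simp add: algebra_simps)
    thus "(\<Sum>v<n. x u * ((if u = v then 1 else 0) - c) * y v) = (\<Sum>v<n. (if u = v then x u * y v else 0)) - (\<Sum>v<n. c * x u * y v)"
      by (simp add: sum_subtractf)
  qed
  also have "\<dots> = (\<Sum>u<n. x u * y u - c * x u * (\<Sum>v<n. y v))"
    by (intro sum.cong refl, simp add: sum_distrib_left)
  also have "\<dots> = (\<Sum>u<n. x u * y u) - c * (\<Sum>u<n. x u) * (\<Sum>v<n. y v)"
    apply (simp add: sum_subtractf sum_distrib_left sum_distrib_right mult.assoc)
    by (rule sum.swap)
  finally show ?thesis .
qed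

lemma cond_a:
  assumes j: "j \<noteq> Suc m" and i: "i \<noteq> Suc m"
  shows "(transpose_mat (Xmat n m a lev j) * (1\<^sub>m n - PS n m a lev {Suc m}) * Xmat n m a lev i
        = 0\<^sub>m (dim_col (Xmat n m a lev j)) (dim_col (Xmat n m a lev i)))
     \<longleftrightarrow> Nmat n m a lev i j = mat (a i) (a j) (\<lambda>(s,t). rvec n m a lev i $ s * rvec n m a lev j $ t / real n)"
proof -
  let ?Xi = "Xmat n m a lev i" and ?Xj = "Xmat n m a lev j" and ?P = "PS n m a lev {Suc m}"
  have Xi: "?Xi \<in> carrier_mat n (a i)" and Xj: "?Xj \<in> carrier_mat n (a j)" using X_carrier[of n m a lev] i j by metis+
  have W: "1\<^sub>m n - ?P \<in> carrier_mat n n" using PS_props(1) by auto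
  have ri: "rvec n m a lev i $ t = (\<Sum>u<n. ?Xi $$ (u,t))" if "t < a i" for t
    using that Xi unfolding rvec_def by (simp add: scalar_prod_def lessThan_atLeast0 col_def)
  have rj: "rvec n m a lev j $ t = (\<Sum>u<n. ?Xj $$ (u,t))" if "t < a j" for t
    using that Xj unfolding rvec_def by (simp add: scalar_prod_def lessThan_atLeast0 col_def)
  have E: "(transpose_mat ?Xj * (1\<^sub>m n - ?P) * ?Xi) $$ (s,t) =
      (\<Sum>u<n. ?Xj $$ (u,s) * ?Xi $$ (u,t)) - 1 / real n * (\<Sum>u<n. ?Xj $$ (u,s)) * (\<Sum>v<n. ?Xi $$ (v,t))"
    if st: "s < a j" "t < a i" for s t
  proof -
    have "(transpose_mat ?Xj * (1\<^sub>m n - ?P) * ?Xi) $$ (s,t) =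
       (\<Sum>u<n. \<Sum>v<n. ?Xj $$ (u,s) * ((if u = v then 1 else 0) - 1 / real n) * ?Xi $$ (v,t))"
      using triple_entry[OF _ W Xi, of "transpose_mat ?Xj" "a j" s t] Xj st
      by (simp add: P_last)
    thus ?thesis by (simp add: sum_center)
  qed
  have N: "Nmat n m a lev i j $$ (s,t) = (\<Sum>u<n. ?Xi $$ (u,s) * ?Xj $$ (u,t))" if "s < a i" "t < a j" for s t
    using that Xi Xj unfolding Nmat_def by (simp add: scalar_prod_def lessThan_atLeast0 col_def row_def)
  have Nd: "Nmat n m a lev i j \<in> carrier_mat (a i) (a j)" unfolding Nmat_def using Xi Xj by auto
  have "(transpose_mat ?Xj * (1\<^sub>m n - ?P) * ?Xi = 0\<^sub>m (dim_col ?Xj) (dim_col ?Xi))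
      \<longleftrightarrow> (\<forall>s<a j. \<forall>t<a i. (transpose_mat ?Xj * (1\<^sub>m n - ?P) * ?Xi) $$ (s,t) = 0)"
    using Xi Xj W by (auto simp: mat_eq_iff)
  also have "\<dots> \<longleftrightarrow> (\<forall>s<a j. \<forall>t<a i. (\<Sum>u<n. ?Xi $$ (u,t) * ?Xj $$ (u,s)) = rvec n m a lev i $ t * rvec n m a lev j $ s / real n)"
    by (auto simp: E ri rj mult.commute)
  also have "\<dots> \<longleftrightarrow> (\<forall>t<a i. \<forall>s<a j. Nmat n m a lev i j $$ (t,s) = rvec n m a lev i $ t * rvec n m a lev j $ s / real n)"
    by (auto simp: N)
  also have "\<dots> \<longleftrightarrow> Nmat n m a lev i j = mat (a i) (a j) (\<lambda>(s,t). rvec n m a lev i $ s * rvec n m a lev j $ t / real n)"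
    using Nd by (auto simp: mat_eq_iff)
  finally show ?thesis .
qed

lemma P_mm:
  assumes lr: "\<forall>u<n. lev m u < a m"
  shows "PS n m a lev {m, Suc m} = Xmat n m a lev m * Rinv n m a lev m * transpose_mat (Xmat n m a lev m)"
proof -
  let ?Xm = "Xmat n m a lev m" and ?B = "Xblock n m a lev {m, Suc m}"
  have Xm: "?Xm \<in> carrier_mat n (a m)" using X_carrier[of n m a lev m] by simp
  have Xme: "?Xm = mat n (a m) (\<lambda>(u,t). if lev m u = t then 1 else 0)" by (rule X_reg) simp
  have B: "?B \<in> carrier_mat n (dim_col ?B)" by (rule carrier_matI) simp_all
  have f: "finite {m, Suc m}" by simp
  have e1: "proj ?B * ?Xm = ?Xm" using PS_fix[OF f, of m] unfolding PS_def by simp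
  have e2: "proj ?Xm * ?B = ?B"
  proof (rule proj_fix[OF Xm B])
    fix k assume k: "k < dim_col ?B"
    obtain j t where jt: "j \<in> {m, Suc m}" "t < dim_col (Xmat n m a lev j)" "col ?B k = col (Xmat n m a lev j) t"
      using block_col[OF f k] by blast
    show "\<exists>c\<in>carrier_vec (a m). col ?B k = ?Xm *\<^sub>v c"
    proof (cases "j = m")
      case True
      hence "col ?B k = ?Xm *\<^sub>v unit_vec (a m) t" using jt col_unit[OF Xm, of t] Xm by auto
      thus ?thesis by (intro bexI[of _ "unit_vec (a m) t"]) auto
    next
      case False
      hence jS: "j = Suc m" and t0: "t = 0" using jt by (auto simp: X_last)
      have "col ?B k = vec n (\<lambda>_. 1)" using jt unfolding jS t0 X_last by (auto simp: col_def)
      also have "\<dots> = ?Xm *\<^sub>v vec (a m) (\<lambda>_. 1)"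
      proof (rule eq_vecI)
        fix u assume u: "u < dim_vec (?Xm *\<^sub>v vec (a m) (\<lambda>_. 1))"
        hence u: "u < n" using Xm by simp
        have "(?Xm *\<^sub>v vec (a m) (\<lambda>_. 1)) $ u = (\<Sum>s<a m. if lev m u = s then 1 else 0)"
          using u unfolding Xme by (simp add: scalar_prod_def lessThan_atLeast0 row_def)
        also have "\<dots> = 1" using lr u by simp
        finally show "vec n (\<lambda>_. 1) $ u = (?Xm *\<^sub>v vec (a m) (\<lambda>_. 1)) $ u" using u by simp
      qed (insert Xm, simp)
      finally show ?thesis by (intro bexI[of _ "vec (a m) (\<lambda>_. 1)"]) auto
    qed
  qed
  have pe: "PS n m a lev {m, Suc m} = proj ?Xm" unfolding PS_def by (rule proj_eq[OF B Xm e1 e2])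
  let ?R = "Rinv n m a lev m"
  have R: "?R \<in> carrier_mat (a m) (a m)" unfolding Rinv_def by simp
  define r where "r s = (\<Sum>u<n. if lev m u = s then 1 else (0::real))" for s
  have rv: "rvec n m a lev m $ s = r s" if "s < a m" for s
    using that unfolding rvec_def r_def Xme by (simp add: scalar_prod_def lessThan_atLeast0 col_def)
  have Re: "?R $$ (s,t) = (if s = t then 1 / r s else 0)" if "s < a m" "t < a m" for s t
    using that unfolding Rinv_def by (simp add: rv)
  have MM: "transpose_mat ?Xm * ?Xm \<in> carrier_mat (a m) (a m)" using Xm by simp
  have Me: "(transpose_mat ?Xm * ?Xm) $$ (s,t) = (if s = t then r s else 0)" if st: "s < a m" "t < a m" for s t
  proof -
    have "(transpose_mat ?Xm * ?Xm) $$ (s,t) = (\<Sum>u<n. (if lev m u = s then 1 else 0) * (if lev m u = t then 1 else (0::real)))"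
      using st unfolding Xme by (simp add: scalar_prod_def lessThan_atLeast0 row_def col_def)
    also have "\<dots> = (if s = t then r s else 0)" unfolding r_def
      by (cases "s = t") (auto intro!: sum.neutral sum.cong)
    finally show ?thesis .
  qed
  have g: "transpose_mat ?Xm * ?Xm * ?R * (transpose_mat ?Xm * ?Xm) = transpose_mat ?Xm * ?Xm"
  proof (rule eq_matI)
    fix s t assume st: "s < dim_row (transpose_mat ?Xm * ?Xm)" "t < dim_col (transpose_mat ?Xm * ?Xm)"
    hence st: "s < a m" "t < a m" using Xm by auto
    have "(transpose_mat ?Xm * ?Xm * ?R * (transpose_mat ?Xm * ?Xm)) $$ (s,t)
       = (\<Sum>k<a m. \<Sum>l<a m. (transpose_mat ?Xm * ?Xm) $$ (s,k) * ?R $$ (k,l) * (transpose_mat ?Xm * ?Xm) $$ (l,t))"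
      by (rule triple_entry[OF MM R MM st])
    also have "\<dots> = (\<Sum>k<a m. \<Sum>l<a m. (if s = k then r s else 0) * (if k = l then 1 / r k else 0) * (if l = t then r l else 0))"
    proof (intro sum.cong refl)
      fix k l assume "k \<in> {..<a m}" "l \<in> {..<a m}"
      hence kl: "k < a m" "l < a m" by auto
      show "(transpose_mat ?Xm * ?Xm) $$ (s,k) * ?R $$ (k,l) * (transpose_mat ?Xm * ?Xm) $$ (l,t) =
        (if s = k then r s else 0) * (if k = l then 1 / r k else 0) * (if l = t then r l else 0)"
        using Me[OF st(1) kl(1)] Re[OF kl] Me[OF kl(2) st(2)] by simp
    qed
    also have "\<dots> = (if s = t then r s * (1 / r s) * r s else 0)"
    proof -
      have "\<And>k l. (if s = k then r s else 0) * (if k = l then 1 / r k else 0) * (if l = t then r l else 0)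
          = (if l = k then (if k = s then (if s = t then r s * (1 / r s) * r s else 0) else 0) else 0)" by auto
      hence "(\<Sum>k<a m. \<Sum>l<a m. (if s = k then r s else 0) * (if k = l then 1 / r k else 0) * (if l = t then r l else 0))
         = (\<Sum>k<a m. \<Sum>l<a m. (if l = k then (if k = s then (if s = t then r s * (1 / r s) * r s else 0) else 0) else 0))"
        by simp
      also have "\<dots> = (\<Sum>k<a m. (if k = s then (if s = t then r s * (1 / r s) * r s else 0) else 0))"
        by (intro sum.cong refl) simp
      also have "\<dots> = (if s = t then r s * (1 / r s) * r s else 0)" using st by simp
      finally show ?thesis .
    qed
    also have "\<dots> = (transpose_mat ?Xm * ?Xm) $$ (s,t)" using st by (simp add: Me)
    finally show "(transpose_mat ?Xm * ?Xm * ?R * (transpose_mat ?Xm * ?Xm)) $$ (s,t) = (transpose_mat ?Xm * ?Xm) $$ (s,t)" .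
  qed (insert Xm, auto)
  show ?thesis unfolding pe by (rule proj_alt[OF Xm R g])
qed

lemma cond_b:
  assumes lr: "\<forall>u<n. lev m u < a m" and j: "j \<noteq> Suc m" and i: "i \<noteq> Suc m"
  shows "(transpose_mat (Xmat n m a lev j) * (1\<^sub>m n - PS n m a lev {m, Suc m}) * Xmat n m a lev i
        = 0\<^sub>m (dim_col (Xmat n m a lev j)) (dim_col (Xmat n m a lev i)))
     \<longleftrightarrow> Nmat n m a lev i j = Nmat n m a lev i m * Rinv n m a lev m * transpose_mat (Nmat n m a lev j m)"
proof -
  let ?Xi = "Xmat n m a lev i" and ?Xj = "Xmat n m a lev j" and ?Xm = "Xmat n m a lev m" and ?R = "Rinv n m a lev m"
  have Xi: "?Xi \<in> carrier_mat n (a i)" and Xj: "?Xj \<in> carrier_mat n (a j)"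
    using X_carrier[of n m a lev] i j by metis+
  have Xm: "?Xm \<in> carrier_mat n (a m)" using X_carrier[of n m a lev m] by simp
  have R: "?R \<in> carrier_mat (a m) (a m)" unfolding Rinv_def by simp
  have RT: "transpose_mat ?R = ?R" unfolding Rinv_def by (rule eq_matI) auto
  note dd = carrier_matD[OF Xi] carrier_matD[OF Xj] carrier_matD[OF Xm] carrier_matD[OF R]
  have "transpose_mat ?Xj * (1\<^sub>m n - PS n m a lev {m, Suc m}) * ?Xi
      = transpose_mat ?Xj * ?Xi - transpose_mat ?Xj * (?Xm * (?R * (transpose_mat ?Xm * ?Xi)))"
    unfolding P_mm[of n lev m a, OF lr] using dd by (simp add: mdistL mdistR one_multL one_multR massoc)
  also have "\<dots> = Nmat n m a lev j i - Nmat n m a lev j m * ?R * Nmat n m a lev m i"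
    unfolding Nmat_def using dd by (simp add: massoc)
  finally have e: "transpose_mat ?Xj * (1\<^sub>m n - PS n m a lev {m, Suc m}) * ?Xi
      = Nmat n m a lev j i - Nmat n m a lev j m * ?R * Nmat n m a lev m i" .
  have tN: "transpose_mat (Nmat n m a lev k l) = Nmat n m a lev l k" for k l
    unfolding Nmat_def by (simp add: transpose_mult_dim)
  have "(transpose_mat ?Xj * (1\<^sub>m n - PS n m a lev {m, Suc m}) * ?Xi = 0\<^sub>m (dim_col ?Xj) (dim_col ?Xi))
     \<longleftrightarrow> Nmat n m a lev j i = Nmat n m a lev j m * ?R * Nmat n m a lev m i"
    unfolding e using dd minus_eq0_iff[of "Nmat n m a lev j i" "Nmat n m a lev j m * ?R * Nmat n m a lev m i"]
    by (simp add: Nmat_def)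
  also have "\<dots> \<longleftrightarrow> transpose_mat (Nmat n m a lev j i) = transpose_mat (Nmat n m a lev j m * ?R * Nmat n m a lev m i)"
    by simp
  also have "transpose_mat (Nmat n m a lev j m * ?R * Nmat n m a lev m i) = Nmat n m a lev i m * ?R * transpose_mat (Nmat n m a lev j m)"
    using dd RT by (simp add: transpose_mult_dim tN Nmat_def massoc)
  finally show ?thesis by (simp add: tN)
qed



theorem theorem4p4:
  fixes n m :: nat and a :: "nat \<Rightarrow> nat" and lev :: "nat \<Rightarrow> nat \<Rightarrow> nat" and i :: nat
  assumes m3: "m \<ge> 3"
    and lev_range: "\<forall>j\<in>{1..m}. \<forall>u<n. lev j u < a j"
    and all_levels: "\<forall>j\<in>{1..m}. \<forall>t<a j. \<exists>u<n. lev j u = t"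
    and i_range: "i \<in> {1..m}"
  shows "((\<forall>Y\<in>carrier_vec n. SS n m a lev i ({1..m+1} - {i}) Y = SS n m a lev i {m+1} Y)
           \<longleftrightarrow> (\<forall>j\<in>{1..m} - {i}. Nmat n m a lev i j =
                 mat (a i) (a j) (\<lambda>(s,t). rvec n m a lev i $ s * rvec n m a lev j $ t / real n)))
       \<and> (i \<le> m - 1 \<longrightarrow>
          ((\<forall>Y\<in>carrier_vec n. SS n m a lev i ({1..m+1} - {i}) Y = SS n m a lev i {m, m+1} Y)
           \<longleftrightarrow> (\<forall>j\<in>{1..m-1} - {i}. Nmat n m a lev i j =
                 Nmat n m a lev i m * Rinv n m a lev m * transpose_mat (Nmat n m a lev j m))))"
proof -
  let ?X = "Xmat n m a lev" and ?T1 = "{1..m+1} - {i}"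
  let ?cond = "\<lambda>T j. transpose_mat (?X j) * (1\<^sub>m n - PS n m a lev T) * ?X i
        = 0\<^sub>m (dim_col (?X j)) (dim_col (?X i))"
  have iS: "i \<noteq> Suc m" using i_range by auto
  have lr: "\<forall>u<n. lev m u < a m" using lev_range m3 by auto
  have f1: "finite ?T1" by simp
  have A: "(\<forall>Y\<in>carrier_vec n. SS n m a lev i ?T1 Y = SS n m a lev i {m+1} Y)
      \<longleftrightarrow> (\<forall>j\<in>{1..m} - {i}. Nmat n m a lev i j =
                 mat (a i) (a j) (\<lambda>(s,t). rvec n m a lev i $ s * rvec n m a lev j $ t / real n))"
  proof -
    have sub: "{m+1} \<subseteq> ?T1" using i_range by auto
    have "(\<forall>Y\<in>carrier_vec n. SS n m a lev i ?T1 Y = SS n m a lev i {m+1} Y) \<longleftrightarrow> (\<forall>j\<in>?T1. ?cond {m+1} j)"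
      by (rule main_general[OF f1 sub])
    also have "\<dots> \<longleftrightarrow> (\<forall>j\<in>{1..m} - {i}. ?cond {Suc m} j)"
    proof -
      have T1e: "?T1 = ({1..m} - {i}) \<union> {Suc m}" using i_range by auto
      have "?cond {Suc m} (Suc m)" by (rule XW_zero) auto
      thus ?thesis unfolding T1e by auto
    qed
    also have "\<dots> \<longleftrightarrow> (\<forall>j\<in>{1..m} - {i}. Nmat n m a lev i j =
                 mat (a i) (a j) (\<lambda>(s,t). rvec n m a lev i $ s * rvec n m a lev j $ t / real n))"
    proof (intro ball_cong refl)
      fix j assume "j \<in> {1..m} - {i}"
      hence "j \<noteq> Suc m" by auto
      thus "?cond {Suc m} j \<longleftrightarrow> Nmat n m a lev i j =
                 mat (a i) (a j) (\<lambda>(s,t). rvec n m a lev i $ s * rvec n m a lev j $ t / real n)"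
        by (rule cond_a[OF _ iS])
    qed
    finally show ?thesis .
  qed
  have B: "(\<forall>Y\<in>carrier_vec n. SS n m a lev i ?T1 Y = SS n m a lev i {m, m+1} Y)
           \<longleftrightarrow> (\<forall>j\<in>{1..m-1} - {i}. Nmat n m a lev i j =
                 Nmat n m a lev i m * Rinv n m a lev m * transpose_mat (Nmat n m a lev j m))"
    if im: "i \<le> m - 1"
  proof -
    have sub: "{m, m+1} \<subseteq> ?T1" using i_range im m3 by auto
    have "(\<forall>Y\<in>carrier_vec n. SS n m a lev i ?T1 Y = SS n m a lev i {m, m+1} Y) \<longleftrightarrow> (\<forall>j\<in>?T1. ?cond {m, m+1} j)"
      by (rule main_general[OF f1 sub])
    also have "\<dots> \<longleftrightarrow> (\<forall>j\<in>{1..m-1} - {i}. ?cond {m, Suc m} j)"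
    proof -
      have T1e: "?T1 = ({1..m-1} - {i}) \<union> {m, Suc m}" using i_range im m3 by auto
      have "?cond {m, Suc m} (Suc m)" "?cond {m, Suc m} m" by (rule XW_zero, auto)+
      thus ?thesis unfolding T1e by auto
    qed
    also have "\<dots> \<longleftrightarrow> (\<forall>j\<in>{1..m-1} - {i}. Nmat n m a lev i j =
                 Nmat n m a lev i m * Rinv n m a lev m * transpose_mat (Nmat n m a lev j m))"
    proof (intro ball_cong refl)
      fix j assume "j \<in> {1..m-1} - {i}"
      hence "j \<noteq> Suc m" by auto
      thus "?cond {m, Suc m} j \<longleftrightarrow> Nmat n m a lev i j =
                 Nmat n m a lev i m * Rinv n m a lev m * transpose_mat (Nmat n m a lev j m)"
        by (rule cond_b[of n lev m a, OF lr _ iS])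
    qed
    finally show ?thesis .
  qed
  show ?thesis using A B by blast
qed

end
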